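(* Let $C$ be an $[n,k,d]$ and $C'$ an $[n',k',d']$ linear code over $\mathbb{F}_q$, let $x \in C \times C'$, $e \in \mathbb{F}_q^{n\times n'}$, $y = x+e$, and suppose $2\sum_{j=1}^{n'} \min\{w(e_j), d\} < d\,d'$. With $\hat{x}$, $\alpha$, $I_E$ and the sets $E_0,\dots,E_J$ as in the context, there exists an index $k \in \{0,1,\dots,J-1\}$ (the same for all rows) such that $$2\,|I_E \setminus E_k| + |E_k| < d',$$ and hence, for every row index $i \in [n]$, $2\, w_{E_k}(\hat{x}^i - x^i) + |E_k| < d'$; that is, an error-and-erasure decoder for $C'$ with erasure set $E_k$ decodes every row $\hat{x}^i$ to $x^i$.
   Context: The product code $C \times C'$ consists of the $n \times n'$ matrices over $\mathbb{F}_q$ all of whose columns lie in $C$ and all of whose rows lie in $C'$. For a matrix $b$, $b_j$ denotes its $j$-th column and $b^i$ its $i$-th row; $w(\cdot)$ is Hamming weight; for $v \in \mathbb{F}_q^{n'}$ and $E \subseteq [n']$, $w_E(v)$ is the number of $j \notin E$ with $v_j \neq 0$. Let $t = \lfloor (d-1)/2 \rfloor$. Column decoding: each column $y_j$ ($j \in [n']$) is decoded by a bounded-distance decoder for $C$, which returns the unique codeword of $C$ within Hamming distance $t$ of $y_j$ if one exists and otherwise declares failure. On success with output $\hat{x}_j$ put $\alpha_j = (d - 2w(y_j - \hat{x}_j))/d$; on failure put $\hat{x}_j = y_j$ and $\alpha_j = 0$. Let $\hat{x}$ be the matrix with columns $\hat{x}_j$, and $I_E \subseteq [n']$ the set of $j$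 for which decoding failed or $\hat{x}_j \neq x_j$. Let $a_1 < a_2 < \dots < a_J$ be the distinct values among $\alpha_1,\dots,\alpha_{n'}$; set $E_0 = \emptyset$ and $E_k = \{ j \in [n'] : \alpha_j \le a_k\}$ for $k \in [J]$. An error-and-erasure decoder for $C'$ with erasure set $E$ returns the unique codeword $c$ with $2w_E(r-c) + |E| < d'$ if it exists. *)

theory Defs
  imports Complex_Main "HOL-Library.Function_Algebras"
begin

text \<open>Vectors of length n over the finite field 'a are functions nat \<Rightarrow> 'a,
  coordinates 0..<n (zero outside).  Matrices n \<times> n' are functions
  nat \<Rightarrow> nat \<Rightarrow> 'a, entry (i,j) with row index i < n, column index j < n'.\<close>

definition vscale :: "'a::field \<Rightarrow> (nat \<Rightarrow> 'a) \<Rightarrow> (nat \<Rightarrow> 'a)" where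
  "vscale c v = (\<lambda>i. c * v i)"

definition supported :: "nat \<Rightarrow> (nat \<Rightarrow> 'a::zero) \<Rightarrow> bool" where
  "supported n v \<longleftrightarrow> (\<forall>i\<ge>n. v i = 0)"

definition hw :: "nat \<Rightarrow> (nat \<Rightarrow> 'a::zero) \<Rightarrow> nat" where
  "hw n v = card {i. i < n \<and> v i \<noteq> 0}"

definition hw_out :: "nat \<Rightarrow> nat set \<Rightarrow> (nat \<Rightarrow> 'a::zero) \<Rightarrow> nat" where
  "hw_out n E v = card {j. j < n \<and> j \<notin> E \<and> v j \<noteq> 0}"

definition hdist :: "nat \<Rightarrow> (nat \<Rightarrow> 'a::ab_group_add) \<Rightarrow> (nat \<Rightarrow> 'a) \<Rightarrow> nat" where
  "hdist n u v = hw n (u - v)"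

definition linear_code :: "nat \<Rightarrow> nat \<Rightarrow> nat \<Rightarrow> (nat \<Rightarrow> 'a::{field,finite}) set \<Rightarrow> bool" where
  "linear_code n k d C \<longleftrightarrow>
     (\<forall>v\<in>C. supported n v) \<and>
     module.subspace vscale C \<and>
     vector_space.dim vscale C = k \<and>
     (\<exists>u\<in>C. \<exists>v\<in>C. u \<noteq> v) \<and>
     d = Min {hdist n u v | u v. u \<in> C \<and> v \<in> C \<and> u \<noteq> v}"

definition col :: "(nat \<Rightarrow> nat \<Rightarrow> 'a) \<Rightarrow> nat \<Rightarrow> (nat \<Rightarrow> 'a)" where
  "col b j = (\<lambda>i. b i j)"

definition row :: "(nat \<Rightarrow> nat \<Rightarrow> 'a) \<Rightarrow> nat \<Rightarrow> (nat \<Rightarrow> 'a)" where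
  "row b i = (\<lambda>j. b i j)"

definition product_code :: "nat \<Rightarrow> nat \<Rightarrow> (nat \<Rightarrow> 'a::zero) set \<Rightarrow> (nat \<Rightarrow> 'a) set
    \<Rightarrow> (nat \<Rightarrow> nat \<Rightarrow> 'a) set" where
  "product_code n n' C C' = {b. (\<forall>i j. (n \<le> i \<or> n' \<le> j) \<longrightarrow> b i j = 0)
       \<and> (\<forall>j<n'. col b j \<in> C) \<and> (\<forall>i<n. row b i \<in> C')}"

definition bd_decode :: "nat \<Rightarrow> nat \<Rightarrow> (nat \<Rightarrow> 'a::ab_group_add) set \<Rightarrow> (nat \<Rightarrow> 'a)
    \<Rightarrow> (nat \<Rightarrow> 'a) option" where
  "bd_decode n d C y =
     (if \<exists>!c. c \<in> C \<and> hdist n y c \<le> (d - 1) div 2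
      then Some (THE c. c \<in> C \<and> hdist n y c \<le> (d - 1) div 2) else None)"

definition col_out :: "nat \<Rightarrow> nat \<Rightarrow> (nat \<Rightarrow> 'a::ab_group_add) set \<Rightarrow> (nat \<Rightarrow> 'a) \<Rightarrow> (nat \<Rightarrow> 'a)" where
  "col_out n d C y = (case bd_decode n d C y of Some c \<Rightarrow> c | None \<Rightarrow> y)"

definition reliab :: "nat \<Rightarrow> nat \<Rightarrow> (nat \<Rightarrow> 'a::ab_group_add) set \<Rightarrow> (nat \<Rightarrow> 'a) \<Rightarrow> real" where
  "reliab n d C y = (case bd_decode n d C y of
       Some c \<Rightarrow> (real d - 2 * real (hw n (y - c))) / real d | None \<Rightarrow> 0)"

definition erasure_set :: "nat \<Rightarrow> (nat \<Rightarrow> real) \<Rightarrow> nat \<Rightarrow> nat set" where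
  "erasure_set n' \<alpha> k =
     (if k = 0 then {}
      else {j. j < n' \<and> \<alpha> j \<le> sorted_list_of_set (\<alpha> ` {..<n'}) ! (k - 1)})"

definition ee_decode :: "nat \<Rightarrow> nat \<Rightarrow> (nat \<Rightarrow> 'a::ab_group_add) set \<Rightarrow> nat set \<Rightarrow> (nat \<Rightarrow> 'a)
    \<Rightarrow> (nat \<Rightarrow> 'a) option" where
  "ee_decode n' d' C' E r =
     (if \<exists>!c. c \<in> C' \<and> 2 * hw_out n' E (r - c) + card E < d'
      then Some (THE c. c \<in> C' \<and> 2 * hw_out n' E (r - c) + card E < d') else None)"

end

theory Submission
  imports Defs
begin

lemma tele:
  fixes b :: "nat \<Rightarrow> real"
  assumes "m \<le> J" "\<forall>k\<le>J. P k \<longleftrightarrow> m \<le> k"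
  shows "(\<Sum>k<Suc J. (b (Suc k) - b k) * (if P k then 1 else c)) = (b (Suc J) - b m) + c * (b m - b 0)"
proof -
  have "(\<Sum>k<Suc J. (b (Suc k) - b k) * (if P k then 1 else c))
     = (\<Sum>k=0..<m. (b (Suc k) - b k) * (if P k then 1 else c)) + (\<Sum>k=m..<Suc J. (b (Suc k) - b k) * (if P k then 1 else c))"
    using assms(1) by (simp add: sum.atLeastLessThan_concat lessThan_atLeast0)
  also have "(\<Sum>k=0..<m. (b (Suc k) - b k) * (if P k then 1 else c)) = (\<Sum>k=0..<m. c * (b (Suc k) - b k))"
    using assms by (intro sum.cong) auto
  also have "\<dots> = c * (b m - b 0)" by (simp add: sum_distrib_left[symmetric] sum_Suc_diff')
  also have "(\<Sum>k=m..<Suc J. (b (Suc k) - b k) * (if P k then 1 else c)) = (\<Sum>k=m..<Suc J. (b (Suc k) - b k))"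
    using assms by (intro sum.cong) auto
  also have "\<dots> = b (Suc J) - b m" using assms by (simp add: sum_Suc_diff')
  finally show ?thesis by simp
qed

lemma strict_sorted_le_iff:
  fixes L :: "real list"
  assumes "sorted_wrt (<) L" "i < length L" "k < length L"
  shows "L ! i \<le> L ! k \<longleftrightarrow> i \<le> k"
proof
  assume "L ! i \<le> L ! k" show "i \<le> k"
  proof (rule ccontr)
    assume "\<not> i \<le> k" then have "L ! k < L ! i" using sorted_wrt_nth_less[OF assms(1), of k i] assms by auto
    then show False using \<open>L ! i \<le> L ! k\<close> by simp
  qed
next
  assume "i \<le> k" then show "L ! i \<le> L ! k"
    using sorted_wrt_nth_less[OF assms(1), of i k] assms by (cases "i = k") auto
qed

lemma threshold:
  fixes \<alpha> :: "nat \<Rightarrow> real" and IE :: "nat set" and n' d' :: nat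
  assumes IE: "IE \<subseteq> {..<n'}" and a01: "\<forall>j<n'. 0 \<le> \<alpha> j \<and> \<alpha> j \<le> 1" and dn: "d' \<le> n'"
    and S: "(\<Sum>j<n'. 1 - (if j \<in> IE then - \<alpha> j else \<alpha> j)) < real d'"
  shows "\<exists>k < card (\<alpha> ` {..<n'}). 2 * card (IE - erasure_set n' \<alpha> k) + card (erasure_set n' \<alpha> k) < d'"
proof (rule ccontr)
  assume H: "\<not> ?thesis"
  define L where "L = sorted_list_of_set (\<alpha> ` {..<n'})"
  define J where "J = card (\<alpha> ` {..<n'})"
  have lenL: "length L = J" unfolding L_def J_def by simp
  have setL: "set L = \<alpha> ` {..<n'}" unfolding L_def by simp
  have ss: "sorted_wrt (<) L" unfolding L_def by (rule strict_sorted_list_of_set)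
  define b where "b k = (if k = 0 then 0 else if k \<le> J then L ! (k - 1) else 1)" for k
  define E where "E = erasure_set n' \<alpha>"
  have Ek: "E k = (if k = 0 then {} else {j. j < n' \<and> \<alpha> j \<le> L ! (k - 1)})" for k
    unfolding E_def erasure_set_def L_def by simp
  have Esub: "E k \<subseteq> {..<n'}" for k using Ek[of k] by auto
  define g where "g k j = (if j \<in> E k then 1 else if j \<in> IE then 2 else (0::real))" for k j
  have npos: "0 < n'" using S dn by (cases "n' = 0") auto
  have mj: "\<exists>m. 1 \<le> m \<and> m \<le> J \<and> b m = \<alpha> j \<and> (\<forall>k\<le>J. j \<in> E k \<longleftrightarrow> m \<le> k)" if j: "j < n'" for j
  proof -
    have "\<alpha> j \<in> set L" using setL j by auto
    then obtain m' where m': "m' < J" "L ! m' = \<alpha> j" using lenL by (auto simp: in_set_conv_nth)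
    have "j \<in> E k \<longleftrightarrow> Suc m' \<le> k" if kJ: "k \<le> J" for k
    proof (cases "k = 0")
      case True then show ?thesis using Ek by simp
    next
      case False
      then have "j \<in> E k \<longleftrightarrow> L ! m' \<le> L ! (k - 1)" using Ek[of k] j m' by auto
      also have "\<dots> \<longleftrightarrow> m' \<le> k - 1" using strict_sorted_le_iff[OF ss, of m' "k - 1"] m' lenL that False by auto
      finally show ?thesis using False by auto
    qed
    then show ?thesis using m' by (intro exI[of _ "Suc m'"]) (auto simp: b_def)
  qed
  have Jpos: "0 < J" using mj[OF npos] by auto
  have bmono: "b k \<le> b (Suc k)" if kJ: "k \<le> J" for k
  proof -
    consider "k = 0" | "0 < k" "k < J" | "k = J" "0 < k" using kJ by (metis le_neq_implies_less neq0_conv)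
    then show ?thesis
    proof cases
      case 1
      have "L ! 0 \<in> set L" using Jpos lenL by simp
      then have "0 \<le> L ! 0" using setL a01 by auto
      then show ?thesis using 1 Jpos by (simp add: b_def)
    next
      case 2 then show ?thesis
        using strict_sorted_le_iff[OF ss, of "k - 1" k] lenL by (simp add: b_def)
    next
      case 3
      have "L ! (J - 1) \<in> set L" using Jpos lenL by simp
      then have "L ! (J - 1) \<le> 1" using setL a01 by auto
      then show ?thesis using 3 by (simp add: b_def)
    qed
  qed
  have perj: "(\<Sum>k<Suc J. (b (Suc k) - b k) * g k j) = 1 - (if j \<in> IE then - \<alpha> j else \<alpha> j)"
    if j: "j < n'" for j
  proof -
    obtain m where m: "1 \<le> m" "m \<le> J" "b m = \<alpha> j" "\<forall>k\<le>J. j \<in> E k \<longleftrightarrow> m \<le> k" using mj[OF j] by blast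
    have "(\<Sum>k<Suc J. (b (Suc k) - b k) * g k j) = (\<Sum>k<Suc J. (b (Suc k) - b k) * (if j \<in> E k then 1 else (if j \<in> IE then 2 else 0)))"
      by (simp add: g_def)
    also have "\<dots> = (b (Suc J) - b m) + (if j \<in> IE then 2 else 0) * (b m - b 0)"
      by (rule tele) (use m in auto)
    finally show ?thesis using m by (auto simp: b_def)
  qed
  have F: "(\<Sum>j<n'. g k j) = real (card (E k) + 2 * card (IE - E k))" for k
  proof -
    have "(\<Sum>j<n'. g k j) = (\<Sum>j<n'. of_bool (j \<in> E k) + 2 * of_bool (j \<in> IE - E k))"
      by (intro sum.cong) (auto simp: g_def)
    also have "\<dots> = real (card ({..<n'} \<inter> E k)) + 2 * real (card ({..<n'} \<inter> (IE - E k)))"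
      by (simp add: sum.distrib sum_distrib_left[symmetric] Int_def)
    also have "{..<n'} \<inter> E k = E k" using Esub by auto
    also have "{..<n'} \<inter> (IE - E k) = IE - E k" using IE by auto
    finally show ?thesis by simp
  qed
  have EJ: "E J = {..<n'}" using mj Esub by auto
  have Fge: "real d' \<le> real (card (E k) + 2 * card (IE - E k))" if "k < Suc J" for k
  proof (cases "k = J")
    case True then show ?thesis using EJ dn by simp
  next
    case False then have "k < J" using that by simp
    then show ?thesis using H unfolding J_def E_def by auto
  qed
  have "real d' = (\<Sum>k<Suc J. (b (Suc k) - b k) * real d')"
    by (simp add: sum_distrib_right[symmetric] sum_lessThan_telescope) (simp add: b_def)
  also have "\<dots> \<le> (\<Sum>k<Suc J. (b (Suc k) - b k) * real (card (E k) + 2 * card (IE - E k)))"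
    by (intro sum_mono mult_left_mono Fge) (use bmono in auto)
  also have "\<dots> = (\<Sum>k<Suc J. (b (Suc k) - b k) * (\<Sum>j<n'. g k j))" by (simp add: F)
  also have "\<dots> = (\<Sum>j<n'. \<Sum>k<Suc J. (b (Suc k) - b k) * g k j)"
    by (simp add: sum_distrib_left sum.swap[of _ "{..<n'}"])
  also have "\<dots> = (\<Sum>j<n'. 1 - (if j \<in> IE then - \<alpha> j else \<alpha> j))" by (intro sum.cong refl perj) simp
  finally show False using S by simp
qed


lemma hw_add: "hw n (u + v) \<le> hw n u + hw (n::nat) (v :: nat \<Rightarrow> 'a::monoid_add)"
proof -
  have "{i. i < n \<and> (u + v) i \<noteq> 0} \<subseteq> {i. i < n \<and> u i \<noteq> 0} \<union> {i. i < n \<and> v i \<noteq> 0}" by auto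
  then have "hw n (u + v) \<le> card ({i. i < n \<and> u i \<noteq> 0} \<union> {i. i < n \<and> v i \<noteq> 0})"
    unfolding hw_def by (intro card_mono) auto
  also have "\<dots> \<le> hw n u + hw n v" unfolding hw_def by (rule card_Un_le)
  finally show ?thesis .
qed

lemma hw_out_add: "hw_out n E (u + v) \<le> hw_out n E u + hw_out (n::nat) E (v :: nat \<Rightarrow> 'a::monoid_add)"
proof -
  have "{i. i < n \<and> i \<notin> E \<and> (u + v) i \<noteq> 0} \<subseteq> {i. i < n \<and> i \<notin> E \<and> u i \<noteq> 0} \<union> {i. i < n \<and> i \<notin> E \<and> v i \<noteq> 0}" by auto
  then have "hw_out n E (u + v) \<le> card ({i. i < n \<and> i \<notin> E \<and> u i \<noteq> 0} \<union> {i. i < n \<and> i \<notin> E \<and> v i \<noteq> 0})"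
    unfolding hw_out_def by (intro card_mono) auto
  also have "\<dots> \<le> hw_out n E u + hw_out n E v" unfolding hw_out_def by (rule card_Un_le)
  finally show ?thesis .
qed

lemma hw_sym: "hw n (u - v) = hw n (v - (u :: nat \<Rightarrow> 'a::ab_group_add))"
proof -
  have "{i. i < n \<and> (u - v) i \<noteq> 0} = {i. i < n \<and> (v - u) i \<noteq> 0}" by auto
  then show ?thesis unfolding hw_def by simp
qed

lemma hw_out_sym: "hw_out n E (u - v) = hw_out n E (v - (u :: nat \<Rightarrow> 'a::ab_group_add))"
proof -
  have "{i. i < n \<and> i \<notin> E \<and> (u - v) i \<noteq> 0} = {i. i < n \<and> i \<notin> E \<and> (v - u) i \<noteq> 0}" by auto
  then show ?thesis unfolding hw_out_def by simp
qed

lemma hw_tri: "hw n (u - w) \<le> hw n (u - v) + hw n (v - (w :: nat \<Rightarrow> 'a::ab_group_add))"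
  using hw_add[of n "u - v" "v - w"] by simp

lemma hw_out_tri: "hw_out n E (u - w) \<le> hw_out n E (u - v) + hw_out n E (v - (w :: nat \<Rightarrow> 'a::ab_group_add))"
  using hw_out_add[of n E "u - v" "v - w"] by simp

lemma hw_le_out: "hw n v \<le> hw_out n E v + card (E \<inter> {..<n})"
proof -
  have "{i. i < n \<and> v i \<noteq> 0} \<subseteq> {i. i < n \<and> i \<notin> E \<and> v i \<noteq> 0} \<union> (E \<inter> {..<n})" by auto
  then have "hw n v \<le> card ({i. i < n \<and> i \<notin> E \<and> v i \<noteq> 0} \<union> (E \<inter> {..<n}))"
    unfolding hw_def by (intro card_mono) auto
  also have "\<dots> \<le> hw_out n E v + card (E \<inter> {..<n})" unfolding hw_out_def by (rule card_Un_le)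
  finally show ?thesis .
qed

lemma hw_le: "hw n v \<le> n"
proof -
  have "hw n v \<le> card {..<n}" unfolding hw_def by (intro card_mono) auto
  then show ?thesis by simp
qed

lemma fin_dists: "finite {hdist n u v | u v. u \<in> C \<and> v \<in> C \<and> u \<noteq> v}"
proof (rule finite_subset[of _ "{..n}"])
  show "{hdist n u v | u v. u \<in> C \<and> v \<in> C \<and> u \<noteq> v} \<subseteq> {..n}"
    using hw_le unfolding hdist_def by fastforce
qed simp

lemma code_dist:
  assumes "linear_code n k d C" "u \<in> C" "v \<in> C" "u \<noteq> v"
  shows "d \<le> hdist n u v"
proof -
  note fin_dists[of n C]
  then show ?thesis using assms unfolding linear_code_def by (auto intro!: Min_le)
qed

lemma code_dpos:
  assumes "linear_code n k d C"
  shows "1 \<le> d \<and> d \<le> n"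
proof -
  note fin = fin_dists[of n C]
  have ne: "{hdist n u v | u v. u \<in> C \<and> v \<in> C \<and> u \<noteq> v} \<noteq> {}" using assms unfolding linear_code_def by blast
  have "d \<in> {hdist n u v | u v. u \<in> C \<and> v \<in> C \<and> u \<noteq> v}"
    using assms Min_in[OF fin ne] unfolding linear_code_def by simp
  then obtain u v where uv: "u \<in> C" "v \<in> C" "u \<noteq> v" "d = hdist n u v" by blast
  then obtain i where i: "u i \<noteq> v i" by auto
  have "i < n" using uv(1,2) i assms unfolding linear_code_def supported_def by (metis not_le)
  then have "i \<in> {i. i < n \<and> (u - v) i \<noteq> 0}" using i by simp
  then have "0 < card {i. i < n \<and> (u - v) i \<noteq> 0}" by (subst card_gt_0_iff) auto
  then have "1 \<le> hdist n u v" unfolding hdist_def hw_def by simp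
  moreover have "hdist n u v \<le> n" unfolding hdist_def by (rule hw_le)
  ultimately show ?thesis using uv by simp
qed

lemma code_eq_if_close:
  assumes "linear_code n k d C" "u \<in> C" "v \<in> C" "hw n (u - v) < d"
  shows "u = v"
  using code_dist[OF assms(1-3)] assms(4) unfolding hdist_def by force

lemma bd_decode_some:
  assumes C: "linear_code n k d C" and c: "c \<in> C" and h: "hdist n y c \<le> (d - 1) div 2"
  shows "bd_decode n d C y = Some c"
proof -
  have d1: "1 \<le> d" using code_dpos[OF C] by simp
  have uniq: "c' = c" if "c' \<in> C" "hdist n y c' \<le> (d - 1) div 2" for c'
  proof (rule code_eq_if_close[OF C that(1) c])
    have 1: "hw n (c' - c) \<le> hw n (c' - y) + hw n (y - c)" by (rule hw_tri)
    have 2: "hw n (c' - y) = hw n (y - c')" by (rule hw_sym)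
    have 3: "hw n (y - c') \<le> (d - 1) div 2" "hw n (y - c) \<le> (d - 1) div 2"
      using that(2) h unfolding hdist_def by auto
    have 4: "2 * ((d - 1) div 2) \<le> d - 1" by simp
    show "hw n (c' - c) < d" using 1 2 3 4 d1 by linarith
  qed
  have ex: "\<exists>!c. c \<in> C \<and> hdist n y c \<le> (d - 1) div 2" by (rule ex1I[of _ c]) (use c h in simp, use uniq in blast)
  have "(THE c. c \<in> C \<and> hdist n y c \<le> (d - 1) div 2) = c" by (intro the_equality) (use c h in simp, use uniq in blast)
  then show ?thesis using ex unfolding bd_decode_def by simp
qed

lemma bd_decode_SomeD:
  assumes "bd_decode n d C y = Some c"
  shows "c \<in> C \<and> hdist n y c \<le> (d - 1) div 2"
proof -
  have ex: "\<exists>!c. c \<in> C \<and> hdist n y c \<le> (d - 1) div 2"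
  proof (rule ccontr)
    assume "\<not> ?thesis" then show False using assms unfolding bd_decode_def by simp
  qed
  have "c = (THE c. c \<in> C \<and> hdist n y c \<le> (d - 1) div 2)" using assms ex unfolding bd_decode_def by simp
  then show ?thesis using theI'[OF ex] by simp
qed

lemma ee_decode_ok:
  assumes C: "linear_code n' k' d' C'" and x: "x \<in> C'" and E: "E \<subseteq> {..<n'}"
    and h: "2 * hw_out n' E (r - x) + card E < d'"
  shows "ee_decode n' d' C' E r = Some x"
proof -
  have uniq: "c = x" if "c \<in> C'" "2 * hw_out n' E (r - c) + card E < d'" for c
  proof (rule code_eq_if_close[OF C that(1) x])
    have 1: "hw n' (c - x) \<le> hw_out n' E (c - x) + card (E \<inter> {..<n'})" by (rule hw_le_out)
    have 2: "E \<inter> {..<n'} = E" using E by auto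
    have 3: "hw_out n' E (c - x) \<le> hw_out n' E (c - r) + hw_out n' E (r - x)" by (rule hw_out_tri)
    have 4: "hw_out n' E (c - r) = hw_out n' E (r - c)" by (rule hw_out_sym)
    have 5: "hw n' (c - x) \<le> hw_out n' E (c - x) + card E" using 1 2 by simp
    show "hw n' (c - x) < d'" using 5 3 4 that(2) h by linarith
  qed
  have ex: "\<exists>!c. c \<in> C' \<and> 2 * hw_out n' E (r - c) + card E < d'" by (rule ex1I[of _ x]) (use x h in simp, use uniq in blast)
  have "(THE c. c \<in> C' \<and> 2 * hw_out n' E (r - c) + card E < d') = x" by (intro the_equality) (use x h in simp, use uniq in blast)
  then show ?thesis using ex unfolding ee_decode_def by simp
qed


theorem mainTheorem3:
  fixes C C' :: "(nat \<Rightarrow> 'a::{field,finite}) set"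
    and n k d n' k' d' :: nat
    and x e :: "nat \<Rightarrow> nat \<Rightarrow> 'a"
  assumes "linear_code n k d C"
    and "linear_code n' k' d' C'"
    and "x \<in> product_code n n' C C'"
    and "\<forall>i j. (n \<le> i \<or> n' \<le> j) \<longrightarrow> e i j = 0"
    and "2 * (\<Sum>j<n'. min (hw n (col e j)) d) < d * d'"
  shows
    "let y = x + e;
         xh = (\<lambda>i j. col_out n d C (col y j) i);
         \<alpha> = (\<lambda>j. reliab n d C (col y j));
         IE = {j. j < n' \<and> (bd_decode n d C (col y j) = None \<or> col xh j \<noteq> col x j)};
         J = card (\<alpha> ` {..<n'});
         E = erasure_set n' \<alpha>
     in \<exists>k<J. 2 * card (IE - E k) + card (E k) < d'
              \<and> (\<forall>i<n. 2 * hw_out n' (E k) (row xh i - row x i) + card (E k) < d')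
              \<and> (\<forall>i<n. ee_decode n' d' C' (E k) (row xh i) = Some (row x i))"
proof -
  define y where "y = x + e"
  define xh where "xh = (\<lambda>i j. col_out n d C (col y j) i)"
  define \<alpha> where "\<alpha> = (\<lambda>j. reliab n d C (col y j))"
  define IE where "IE = {j. j < n' \<and> (bd_decode n d C (col y j) = None \<or> col xh j \<noteq> col x j)}"
  define E where "E = erasure_set n' \<alpha>"
  have C1: "1 \<le> d \<and> d \<le> n" by (rule code_dpos[OF assms(1)])
  have C2: "1 \<le> d' \<and> d' \<le> n'" by (rule code_dpos[OF assms(2)])
  have xcol: "col x j \<in> C" if "j < n'" for j using assms(3) that unfolding product_code_def by auto
  have xrow: "row x i \<in> C'" if "i < n" for i using assms(3) that unfolding product_code_def by auto
  have colxh: "col xh j = col_out n d C (col y j)" for j by (simp add: xh_def col_def)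
  have ycol: "col y j - col x j = col e j" for j by (auto simp: y_def col_def)
  have td: "2 * ((d - 1) div 2) \<le> d - 1" by simp
  have dpos: "0 < real d" using C1 by simp
  have colkey: "0 \<le> \<alpha> j \<and> \<alpha> j \<le> 1 \<and>
      1 - (if j \<in> IE then - \<alpha> j else \<alpha> j) \<le> 2 * real (min (hw n (col e j)) d) / real d"
    if j: "j < n'" for j
  proof -
    define w where "w = hw n (col e j)"
    have yx: "hw n (col y j - col x j) = w" by (simp add: ycol w_def)
    show ?thesis
    proof (cases "bd_decode n d C (col y j)")
      case None
      have a0: "\<alpha> j = 0" by (simp add: \<alpha>_def reliab_def None)
      have inI: "j \<in> IE" using j None by (simp add: IE_def)
      have "\<not> w \<le> (d - 1) div 2"
      proof
        assume "w \<le> (d - 1) div 2"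
        then have "bd_decode n d C (col y j) = Some (col x j)"
          using bd_decode_some[OF assms(1) xcol[OF j]] yx by (simp add: hdist_def)
        then show False using None by simp
      qed
      then have "d \<le> 2 * min w d" using td C1 by linarith
      then have "real d \<le> 2 * real (min w d)" by linarith
      then have "1 \<le> 2 * real (min w d) / real d" using dpos by (simp add: le_divide_eq)
      then show ?thesis using a0 inI w_def by simp
    next
      case (Some c)
      have c: "c \<in> C" "hdist n (col y j) c \<le> (d - 1) div 2" using bd_decode_SomeD[OF Some] by auto
      define s where "s = hw n (col y j - c)"
      have s: "s \<le> (d - 1) div 2" using c(2) by (simp add: s_def hdist_def)
      have a: "\<alpha> j = (real d - 2 * real s) / real d" by (simp add: \<alpha>_def reliab_def Some s_def)
      have sd: "2 * real s < real d" using s td C1 by linarith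
      have a01: "0 \<le> \<alpha> j \<and> \<alpha> j \<le> 1" unfolding a using sd dpos by (auto simp: divide_simps)
      have cx: "col xh j = c" using colxh Some by (simp add: col_out_def)
      show ?thesis
      proof (cases "c = col x j")
        case True
        then have nI: "j \<notin> IE" using cx by (simp add: IE_def Some)
        have sw: "s = w" using yx True s_def by simp
        have "min w d = w" using sw s td C1 by linarith
        then have "1 - \<alpha> j = 2 * real (min w d) / real d" using a sw dpos by (simp add: field_simps)
        then show ?thesis using a01 nI w_def by simp
      next
        case False
        then have inI: "j \<in> IE" using cx j by (simp add: IE_def)
        have "d \<le> hdist n c (col x j)" by (rule code_dist[OF assms(1) c(1) xcol[OF j] False])
        also have "\<dots> \<le> hw n (c - col y j) + hw n (col y j - col x j)" unfolding hdist_def by (rule hw_tri)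
        also have "hw n (c - col y j) = s" unfolding s_def by (rule hw_sym)
        finally have "d \<le> s + w" using yx by (simp only:)
        then have "real d \<le> real s + real (min w d)" by linarith
        then have "1 + \<alpha> j \<le> 2 * real (min w d) / real d" using a dpos by (simp add: field_simps)
        then show ?thesis using a01 inI w_def by simp
      qed
    qed
  qed
  have IEsub: "IE \<subseteq> {..<n'}" by (auto simp: IE_def)
  have S: "(\<Sum>j<n'. 1 - (if j \<in> IE then - \<alpha> j else \<alpha> j)) < real d'"
  proof -
    have "(\<Sum>j<n'. 1 - (if j \<in> IE then - \<alpha> j else \<alpha> j)) \<le> (\<Sum>j<n'. 2 * real (min (hw n (col e j)) d) / real d)"
      by (intro sum_mono) (use colkey in auto)
    also have "\<dots> = real (2 * (\<Sum>j<n'. min (hw n (col e j)) d)) / real d"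
      by (simp add: sum_divide_distrib[symmetric] sum_distrib_left)
    also have "\<dots> < real d'"
    proof -
      have "real (2 * (\<Sum>j<n'. min (hw n (col e j)) d)) < real d * real d'"
        using assms(5) by (metis of_nat_less_iff of_nat_mult)
      then show ?thesis using dpos by (simp add: divide_less_eq mult.commute)
    qed
    finally show ?thesis .
  qed
  obtain kk where kk: "kk < card (\<alpha> ` {..<n'})" "2 * card (IE - E kk) + card (E kk) < d'"
    using threshold[OF IEsub _ _ S] colkey C2 unfolding E_def by blast
  have Esub: "E kk \<subseteq> {..<n'}" by (auto simp: E_def erasure_set_def)
  have rowb: "hw_out n' (E kk) (row xh i - row x i) \<le> card (IE - E kk)" if i: "i < n" for i
  proof -
    have "{j. j < n' \<and> j \<notin> E kk \<and> (row xh i - row x i) j \<noteq> 0} \<subseteq> IE - E kk"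
    proof
      fix j assume "j \<in> {j. j < n' \<and> j \<notin> E kk \<and> (row xh i - row x i) j \<noteq> 0}"
      then have j: "j < n'" "j \<notin> E kk" "xh i j \<noteq> x i j" by (auto simp: row_def)
      then have "col xh j \<noteq> col x j" by (metis col_def)
      then show "j \<in> IE - E kk" using j by (simp add: IE_def)
    qed
    then show ?thesis unfolding hw_out_def
      by (intro card_mono) (use IEsub in \<open>auto intro: finite_subset\<close>)
  qed
  have rows: "\<forall>i<n. 2 * hw_out n' (E kk) (row xh i - row x i) + card (E kk) < d'"
    using rowb kk(2) by (meson add_le_mono1 le_less_trans mult_le_mono2)
  have dec: "\<forall>i<n. ee_decode n' d' C' (E kk) (row xh i) = Some (row x i)"
    using ee_decode_ok[OF assms(2) xrow Esub] rows by blast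
  have "\<exists>k<card (\<alpha> ` {..<n'}). 2 * card (IE - E k) + card (E k) < d'
              \<and> (\<forall>i<n. 2 * hw_out n' (E k) (row xh i - row x i) + card (E k) < d')
              \<and> (\<forall>i<n. ee_decode n' d' C' (E k) (row xh i) = Some (row x i))"
    using kk rows dec by blast
  then show ?thesis unfolding Let_def y_def[symmetric] xh_def[symmetric] \<alpha>_def[symmetric]
      IE_def[symmetric] E_def[symmetric] .
qed

end
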